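(* Let $G$ be a graph with a vertex $r$ that belongs to at least one but not all minimum vertex covers of $G$ and satisfies $N[r]\subsetneq V(G)$. Let $Y$ be a minimal blocking set of $G$ with $r\notin Y$. Then: (i) $Y$ is a blocking set of $G-r$ and $Y\setminus N[r]$ is a blocking set of $G-N[r]$; (ii) for every minimal blocking set $Y'$ of $G-r$ and every minimal blocking set $\widetilde Y$ of $G-N[r]$, the set $Y'\cup\widetilde Y$ is a blocking set of $G$; (iii) for every $y\in Y$, either $Y\setminus\{y\}$ is not a blocking set of $G-r$, or $Y\setminus(\{y\}\cup N[r])$ is not a blocking set of $G-N[r]$.
   Context: $\mathrm{OPT}(G)$ is the minimum vertex cover size; minimum vertex covers have size $\mathrm{OPT}(G)$. $Y\subseteq V(G)$ is a blocking set if no minimum vertex cover contains $Y$; minimal if no proper subset is. $N(r)$ is the open and $N[r]=N(r)\cup\{r\}$ the closed neighborhood of $r$. *)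

theory Defs
  imports Main
begin

text \<open>A finite simple graph is given by a finite vertex set V and a symmetric,
irreflexive edge relation E; only edges between vertices of V count.
The induced subgraph G - S is (V - S, E).\<close>

definition simple_graph :: "'a set \<Rightarrow> ('a \<Rightarrow> 'a \<Rightarrow> bool) \<Rightarrow> bool" where
  "simple_graph V E \<longleftrightarrow> finite V \<and> (\<forall>u v. E u v \<longrightarrow> E v u) \<and> (\<forall>u. \<not> E u u)"

definition vertex_cover :: "'a set \<Rightarrow> ('a \<Rightarrow> 'a \<Rightarrow> bool) \<Rightarrow> 'a set \<Rightarrow> bool" where
  "vertex_cover V E C \<longleftrightarrow> C \<subseteq> V \<and> (\<forall>u\<in>V. \<forall>v\<in>V. E u v \<longrightarrow> u \<in> C \<or> v \<in> C)"

definition OPT :: "'a set \<Rightarrow> ('a \<Rightarrow> 'a \<Rightarrow> bool) \<Rightarrow> nat" where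
  "OPT V E = Min (card ` {C. vertex_cover V E C})"

definition min_vertex_cover :: "'a set \<Rightarrow> ('a \<Rightarrow> 'a \<Rightarrow> bool) \<Rightarrow> 'a set \<Rightarrow> bool" where
  "min_vertex_cover V E C \<longleftrightarrow> vertex_cover V E C \<and> card C = OPT V E"

definition blocking_set :: "'a set \<Rightarrow> ('a \<Rightarrow> 'a \<Rightarrow> bool) \<Rightarrow> 'a set \<Rightarrow> bool" where
  "blocking_set V E Y \<longleftrightarrow> Y \<subseteq> V \<and> (\<forall>C. min_vertex_cover V E C \<longrightarrow> \<not> Y \<subseteq> C)"

definition minimal_blocking_set :: "'a set \<Rightarrow> ('a \<Rightarrow> 'a \<Rightarrow> bool) \<Rightarrow> 'a set \<Rightarrow> bool" where
  "minimal_blocking_set V E Y \<longleftrightarrow> blocking_set V E Y \<and> (\<forall>Z. Z \<subset> Y \<longrightarrow> \<not> blocking_set V E Z)"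

definition open_nbhd :: "'a set \<Rightarrow> ('a \<Rightarrow> 'a \<Rightarrow> bool) \<Rightarrow> 'a \<Rightarrow> 'a set" where
  "open_nbhd V E r = {v\<in>V. E r v}"

definition closed_nbhd :: "'a set \<Rightarrow> ('a \<Rightarrow> 'a \<Rightarrow> bool) \<Rightarrow> 'a \<Rightarrow> 'a set" where
  "closed_nbhd V E r = insert r (open_nbhd V E r)"

end

theory Submission
  imports Defs
begin

lemma vc_fin_set: "finite V \<Longrightarrow> finite {C. vertex_cover V E C}"
  by (rule finite_subset[of _ "Pow V"]) (auto simp: vertex_cover_def)

lemma opt_le: "finite V \<Longrightarrow> vertex_cover V E C \<Longrightarrow> OPT V E \<le> card C"
  unfolding OPT_def by (rule Min_le) (auto simp: vc_fin_set)

lemma opt_ex: "finite V \<Longrightarrow> \<exists>C. min_vertex_cover V E C"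
proof -
  assume f: "finite V"
  have "vertex_cover V E V" by (auto simp: vertex_cover_def)
  hence "OPT V E \<in> card ` {C. vertex_cover V E C}"
    unfolding OPT_def by (intro Min_in) (auto simp: vc_fin_set f)
  thus ?thesis by (auto simp: min_vertex_cover_def)
qed

lemma main_facts:
  assumes G: "simple_graph V E"
    and rV: "r \<in> V"
    and r_in_some: "\<exists>C. min_vertex_cover V E C \<and> r \<in> C"
    and r_notin_some: "\<exists>C. min_vertex_cover V E C \<and> r \<notin> C"
  defines "N \<equiv> open_nbhd V E r"
  shows "(\<forall>D. min_vertex_cover (V - {r}) E D \<longrightarrow> min_vertex_cover V E (insert r D))
       \<and> (\<forall>D. min_vertex_cover (V - closed_nbhd V E r) E D \<longrightarrow> min_vertex_cover V E (D \<union> N))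
       \<and> (\<forall>C. min_vertex_cover V E C \<longrightarrow> r \<in> C \<longrightarrow> min_vertex_cover (V - {r}) E (C - {r}))
       \<and> (\<forall>C. min_vertex_cover V E C \<longrightarrow> r \<notin> C \<longrightarrow> min_vertex_cover (V - closed_nbhd V E r) E (C - N))"
proof -
  have fV: "finite V" and sym: "\<And>u v. E u v \<Longrightarrow> E v u" using G by (auto simp: simple_graph_def)
  have irr: "\<And>u. \<not> E u u" using G by (auto simp: simple_graph_def)
  have cN: "closed_nbhd V E r = insert r N" by (simp add: closed_nbhd_def N_def)
  have NV: "N \<subseteq> V" "r \<notin> N" using irr by (auto simp: N_def open_nbhd_def)
  have fN: "finite N" using NV fV finite_subset by blast
  have f1: "finite (V - {r})" and f2: "finite (V - insert r N)" using fV by auto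
  have vcfin: "\<And>W C. finite W \<Longrightarrow> vertex_cover W E C \<Longrightarrow> finite C"
    by (auto simp: vertex_cover_def intro: finite_subset)
  have A: "vertex_cover V E (insert r D)" if "vertex_cover (V - {r}) E D" for D
    using that rV by (auto simp: vertex_cover_def)
  have B: "vertex_cover V E (D \<union> N)" if "vertex_cover (V - insert r N) E D" for D
    unfolding vertex_cover_def
  proof (intro conjI ballI impI)
    show "D \<union> N \<subseteq> V" using that NV by (auto simp: vertex_cover_def)
    fix u v assume uv: "u \<in> V" "v \<in> V" "E u v"
    show "u \<in> D \<union> N \<or> v \<in> D \<union> N"
    proof (cases "u = r \<or> v = r \<or> u \<in> N \<or> v \<in> N")
      case True thus ?thesis using uv sym[OF uv(3)] by (auto simp: N_def open_nbhd_def)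
    next
      case False thus ?thesis using uv that by (auto simp: vertex_cover_def)
    qed
  qed
  have Cc: "vertex_cover (V - {r}) E (C - {r})" if "vertex_cover V E C" for C
    using that by (auto simp: vertex_cover_def)
  have Dn: "N \<subseteq> C" if "vertex_cover V E C" "r \<notin> C" for C
  proof
    fix v assume "v \<in> N"
    hence "v \<in> V" "E r v" by (auto simp: N_def open_nbhd_def)
    thus "v \<in> C" using that rV unfolding vertex_cover_def by blast
  qed
  have Dd: "vertex_cover (V - insert r N) E (C - N)" if "vertex_cover V E C" "r \<notin> C" for C
    using that by (auto simp: vertex_cover_def)
  define k where "k = OPT V E"
  obtain C0 where C0: "min_vertex_cover V E C0" "r \<in> C0" using r_in_some by blast
  obtain C1 where C1: "min_vertex_cover V E C1" "r \<notin> C1" using r_notin_some by blast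
  obtain D1 where D1: "min_vertex_cover (V - {r}) E D1" using opt_ex[OF f1] by blast
  obtain D2 where D2: "min_vertex_cover (V - insert r N) E D2" using opt_ex[OF f2] by blast
  have fC0: "finite C0" using C0 vcfin[OF fV] unfolding min_vertex_cover_def by blast
  have fC1: "finite C1" using C1 vcfin[OF fV] unfolding min_vertex_cover_def by blast
  have fD1: "finite D1" using D1 vcfin[OF f1] unfolding min_vertex_cover_def by blast
  have fD2: "finite D2" using D2 vcfin[OF f2] unfolding min_vertex_cover_def by blast
  have D1r: "r \<notin> D1" using D1 by (auto simp: min_vertex_cover_def vertex_cover_def)
  have D2N: "D2 \<inter> N = {}" using D2 by (auto simp: min_vertex_cover_def vertex_cover_def)
  have k0: "card C0 = k" "card C1 = k" using C0 C1 by (auto simp: min_vertex_cover_def k_def)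
  have h1: "OPT (V - {r}) E \<le> k - 1"
    using opt_le[OF f1 Cc[of C0]] C0 fC0 k0 by (auto simp: min_vertex_cover_def)
  have h2: "k \<le> OPT (V - {r}) E + 1"
    using opt_le[OF fV A[of D1]] D1 fD1 D1r by (auto simp: min_vertex_cover_def k_def)
  have kpos: "k \<ge> 1" using C0 fC0 k0 by (metis One_nat_def Suc_leI card_gt_0_iff empty_iff)
  have O1: "OPT (V - {r}) E = k - 1" using h1 h2 kpos by linarith
  have NC1: "N \<subseteq> C1" using Dn C1 by (auto simp: min_vertex_cover_def)
  have h3: "OPT (V - insert r N) E \<le> k - card N"
  proof -
    have "OPT (V - insert r N) E \<le> card (C1 - N)" using opt_le[OF f2 Dd[of C1]] C1 by (auto simp: min_vertex_cover_def)
    also have "card (C1 - N) = k - card N" using card_Diff_subset[OF fN NC1] k0 by simp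
    finally show ?thesis .
  qed
  have h4: "k \<le> OPT (V - insert r N) E + card N"
  proof -
    have "k \<le> card (D2 \<union> N)" using opt_le[OF fV B[of D2]] D2 unfolding min_vertex_cover_def k_def by blast
    also have "card (D2 \<union> N) = card D2 + card N" using card_Un_disjoint[OF fD2 fN D2N] .
    also have "card D2 = OPT (V - insert r N) E" using D2 unfolding min_vertex_cover_def by blast
    finally show ?thesis .
  qed
  have NleK: "card N \<le> k" using card_mono[OF fC1 NC1] k0 by simp
  have O2: "OPT (V - insert r N) E = k - card N" using h3 h4 NleK by linarith
  have P1: "min_vertex_cover V E (insert r D)" if d: "min_vertex_cover (V - {r}) E D" for D
  proof -
    have vc: "vertex_cover (V - {r}) E D" and cd: "card D = k - 1" using d O1 unfolding min_vertex_cover_def by auto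
    have "r \<notin> D" using vc unfolding vertex_cover_def by blast
    moreover have "finite D" using vc vcfin[OF f1] by blast
    ultimately have "card (insert r D) = k" using cd kpos by simp
    thus ?thesis using A[OF vc] unfolding min_vertex_cover_def k_def by blast
  qed
  have P2: "min_vertex_cover V E (D \<union> N)" if d: "min_vertex_cover (V - insert r N) E D" for D
  proof -
    have vc: "vertex_cover (V - insert r N) E D" and cd: "card D = k - card N" using d O2 unfolding min_vertex_cover_def by auto
    have "D \<inter> N = {}" using vc unfolding vertex_cover_def by blast
    moreover have "finite D" using vc vcfin[OF f2] by blast
    ultimately have "card (D \<union> N) = card D + card N" using card_Un_disjoint fN by blast
    hence "card (D \<union> N) = k" using cd NleK by simp
    thus ?thesis using B[OF vc] unfolding min_vertex_cover_def k_def by blast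
  qed
  have P3: "min_vertex_cover (V - {r}) E (C - {r})" if c: "min_vertex_cover V E C" "r \<in> C" for C
  proof -
    have vc: "vertex_cover V E C" and cd: "card C = k" using c unfolding min_vertex_cover_def k_def by auto
    have "finite C" using vc vcfin[OF fV] by blast
    hence "card (C - {r}) = k - 1" using cd c(2) by simp
    thus ?thesis using Cc[OF vc] O1 unfolding min_vertex_cover_def by simp
  qed
  have P4: "min_vertex_cover (V - insert r N) E (C - N)" if c: "min_vertex_cover V E C" "r \<notin> C" for C
  proof -
    have vc: "vertex_cover V E C" and cd: "card C = k" using c unfolding min_vertex_cover_def k_def by auto
    have "finite C" using vc vcfin[OF fV] by blast
    moreover have "N \<subseteq> C" using Dn[OF vc c(2)] .
    ultimately have "card (C - N) = k - card N" using cd card_Diff_subset[OF fN] by simp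
    thus ?thesis using Dd[OF vc c(2)] O2 unfolding min_vertex_cover_def by simp
  qed
  show ?thesis unfolding cN using P1 P2 P3 P4 by blast
qed

theorem mainTheorem13:
  fixes V :: "'a set" and E :: "'a \<Rightarrow> 'a \<Rightarrow> bool" and r :: 'a and Y :: "'a set"
  assumes G: "simple_graph V E"
    and rV: "r \<in> V"
    and r_in_some: "\<exists>C. min_vertex_cover V E C \<and> r \<in> C"
    and r_notin_some: "\<exists>C. min_vertex_cover V E C \<and> r \<notin> C"
    and Nr: "closed_nbhd V E r \<subset> V"
    and Y: "minimal_blocking_set V E Y"
    and rY: "r \<notin> Y"
  shows "(blocking_set (V - {r}) E Y
          \<and> blocking_set (V - closed_nbhd V E r) E (Y - closed_nbhd V E r))
       \<and> (\<forall>Y' Yt. minimal_blocking_set (V - {r}) E Y'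
                 \<longrightarrow> minimal_blocking_set (V - closed_nbhd V E r) E Yt
                 \<longrightarrow> blocking_set V E (Y' \<union> Yt))
       \<and> (\<forall>y\<in>Y. \<not> blocking_set (V - {r}) E (Y - {y})
               \<or> \<not> blocking_set (V - closed_nbhd V E r) E (Y - ({y} \<union> closed_nbhd V E r)))"
proof -
  define N where "N = open_nbhd V E r"
  have cN: "closed_nbhd V E r = insert r N" by (simp add: closed_nbhd_def N_def)
  note F = main_facts[OF G rV r_in_some r_notin_some, folded N_def, unfolded cN]
  have a: "\<And>D. min_vertex_cover (V - {r}) E D \<Longrightarrow> min_vertex_cover V E (insert r D)"
    using conjunct1[OF F] by blast
  have b: "\<And>D. min_vertex_cover (V - insert r N) E D \<Longrightarrow> min_vertex_cover V E (D \<union> N)"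
    using conjunct1[OF conjunct2[OF F]] by blast
  have c: "\<And>C. min_vertex_cover V E C \<Longrightarrow> r \<in> C \<Longrightarrow> min_vertex_cover (V - {r}) E (C - {r})"
    using conjunct1[OF conjunct2[OF conjunct2[OF F]]] by blast
  have d: "\<And>C. min_vertex_cover V E C \<Longrightarrow> r \<notin> C \<Longrightarrow> min_vertex_cover (V - insert r N) E (C - N)"
    using conjunct2[OF conjunct2[OF conjunct2[OF F]]] by blast
  have YB: "blocking_set V E Y" and Ymin: "\<And>Z. Z \<subset> Y \<Longrightarrow> \<not> blocking_set V E Z"
    using Y unfolding minimal_blocking_set_def by blast+
  have gen: "blocking_set V E A" if "A \<subseteq> V" "blocking_set (V - {r}) E A'"
     "blocking_set (V - insert r N) E At" "A' \<subseteq> A" "At \<subseteq> A" for A A' At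
    unfolding blocking_set_def
  proof (intro conjI allI impI)
    show "A \<subseteq> V" by fact
    fix C assume C: "min_vertex_cover V E C"
    show "\<not> A \<subseteq> C"
    proof
      assume AC: "A \<subseteq> C"
      show False
      proof (cases "r \<in> C")
        case True
        have "A' \<subseteq> V - {r}" using that(2) unfolding blocking_set_def by blast
        hence "A' \<subseteq> C - {r}" using that(4) AC by blast
        thus False using c[OF C True] that(2) unfolding blocking_set_def by blast
      next
        case False
        have "At \<subseteq> V - insert r N" using that(3) unfolding blocking_set_def by blast
        hence "At \<subseteq> C - N" using that(5) AC by blast
        thus False using d[OF C False] that(3) unfolding blocking_set_def by blast
      qed
    qed
  qed
  have YV: "Y \<subseteq> V" using YB by (auto simp: blocking_set_def)
  have i1: "blocking_set (V - {r}) E Y"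
    unfolding blocking_set_def
  proof (intro conjI allI impI notI)
    show "Y \<subseteq> V - {r}" using YV rY by blast
    fix D assume "min_vertex_cover (V - {r}) E D" "Y \<subseteq> D"
    thus False using a[of D] YB unfolding blocking_set_def by blast
  qed
  have i2: "blocking_set (V - insert r N) E (Y - insert r N)"
    unfolding blocking_set_def
  proof (intro conjI allI impI notI)
    show "Y - insert r N \<subseteq> V - insert r N" using YV by blast
    fix D assume "min_vertex_cover (V - insert r N) E D" "Y - insert r N \<subseteq> D"
    moreover have "Y \<subseteq> D \<union> N" using calculation(2) rY by blast
    ultimately show False using b[of D] YB unfolding blocking_set_def by blast
  qed
  have ii: "\<forall>Y' Yt. minimal_blocking_set (V - {r}) E Y'
                 \<longrightarrow> minimal_blocking_set (V - insert r N) E Yt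
                 \<longrightarrow> blocking_set V E (Y' \<union> Yt)"
  proof (intro allI impI)
    fix Y' Yt assume h: "minimal_blocking_set (V - {r}) E Y'" "minimal_blocking_set (V - insert r N) E Yt"
    hence h2: "blocking_set (V - {r}) E Y'" "blocking_set (V - insert r N) E Yt"
      unfolding minimal_blocking_set_def by blast+
    hence "Y' \<union> Yt \<subseteq> V" unfolding blocking_set_def by blast
    thus "blocking_set V E (Y' \<union> Yt)" using gen[OF _ h2] by blast
  qed
  have iii: "\<forall>y\<in>Y. \<not> blocking_set (V - {r}) E (Y - {y})
               \<or> \<not> blocking_set (V - insert r N) E (Y - ({y} \<union> insert r N))"
  proof (intro ballI)
    fix y assume y: "y \<in> Y"
    show "\<not> blocking_set (V - {r}) E (Y - {y})
               \<or> \<not> blocking_set (V - insert r N) E (Y - ({y} \<union> insert r N))"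
    proof (rule ccontr)
      assume "\<not> ?thesis"
      hence h: "blocking_set (V - {r}) E (Y - {y})" "blocking_set (V - insert r N) E (Y - ({y} \<union> insert r N))" by blast+
      have "Y - {y} \<subseteq> V" using YV by blast
      hence "blocking_set V E (Y - {y})" using gen[OF _ h] by blast
      moreover have "Y - {y} \<subset> Y" using y by auto
      ultimately show False using Ymin by blast
    qed
  qed
  show ?thesis unfolding cN using i1 i2 ii iii by blast
qed

end
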